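(* For a positive integer $k$, let $N(k)$ be the maximum length $N$ of an $\mathbb{R}$-Sidon sequence $(m_n)_{n=1}^N$ with all elements in $[1,k]$. Then $$\limsup_{k\to\infty}\frac{N(k)}{\sqrt{k}}\le 1.$$
   Context: A finite sequence of real numbers $(m_n)_{n=1}^N$ is an $\mathbb{R}$-Sidon sequence if $|(m_{n_1}+m_{n_2})-(m_n+m_{n_3})|\ge1$ for all $n_1,n_2,n,n_3\in\{1,\ldots,N\}$ with $(n_1,n_2)\ne(n,n_3)$ and $(n_1,n_2)\ne(n_3,n)$. *)

theory Defs
  imports "HOL-Analysis.Analysis"
begin

definition R_Sidon :: "(nat \<Rightarrow> real) \<Rightarrow> nat \<Rightarrow> bool" where
  "R_Sidon m N \<longleftrightarrow>
     (\<forall>n1\<in>{1..N}. \<forall>n2\<in>{1..N}. \<forall>n\<in>{1..N}. \<forall>n3\<in>{1..N}.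
        (n1, n2) \<noteq> (n, n3) \<and> (n1, n2) \<noteq> (n3, n) \<longrightarrow>
        \<bar>(m n1 + m n2) - (m n + m n3)\<bar> \<ge> 1)"

definition Nmax :: "nat \<Rightarrow> nat" where
  "Nmax k = Max {N. \<exists>m. R_Sidon m N \<and> (\<forall>i\<in>{1..N}. m i \<in> {1..real k})}"

end

theory Submission
  imports Defs "HOL-Real_Asymp.Real_Asymp"
begin

lemma floor_diff_bounds:
  fixes a b :: real
  shows "\<lfloor>a - b\<rfloor> \<le> \<lfloor>a\<rfloor> - \<lfloor>b\<rfloor>" "\<lfloor>a\<rfloor> - \<lfloor>b\<rfloor> \<le> \<lfloor>a - b\<rfloor> + 1"
proof -
  have "\<lfloor>a - b\<rfloor> + \<lfloor>b\<rfloor> \<le> \<lfloor>a\<rfloor>"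
    unfolding le_floor_iff by (simp; linarith)
  then show "\<lfloor>a - b\<rfloor> \<le> \<lfloor>a\<rfloor> - \<lfloor>b\<rfloor>" by simp
  have "\<lfloor>a\<rfloor> - \<lfloor>b\<rfloor> - 1 \<le> \<lfloor>a - b\<rfloor>"
    unfolding le_floor_iff by (simp; linarith)
  then show "\<lfloor>a\<rfloor> - \<lfloor>b\<rfloor> \<le> \<lfloor>a - b\<rfloor> + 1" by simp
qed

lemma core:
  assumes S: "R_Sidon m N" and rng: "\<forall>i\<in>{1..N}. m i \<in> {1..real k}" and u: "u \<ge> 1"
  shows "(real u * real N)^2 \<le> (real u * real N + real u * (real u + 1)) * (real k + real u)"
proof -
  define f where "f i = \<lfloor>m i\<rfloor>" for i
  define T where "T = {1 - int u .. int k}"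
  define W where "W t = {i\<in>{1..N}. t \<le> f i \<and> f i \<le> t + int u - 1}" for t
  define D where "D t = {p\<in>W t \<times> W t. fst p \<noteq> snd p}" for t
  have fr: "1 \<le> f i \<and> f i \<le> int k" if "i \<in> {1..N}" for i
  proof -
    have "1 \<le> m i" "m i \<le> real k" using rng that by auto
    then show ?thesis unfolding f_def by (auto simp: le_floor_iff floor_le_iff)
  qed
  have finT: "finite T" by (simp add: T_def)
  have finW: "finite (W t)" for t by (simp add: W_def)
  have cardT: "card T = k + u" by (simp add: T_def)
  have sum1: "(\<Sum>t\<in>T. card (W t)) = u * N"
  proof -
    have "(\<Sum>t\<in>T. card (W t)) = (\<Sum>t\<in>T. \<Sum>i\<in>{1..N}. if t \<le> f i \<and> f i \<le> t + int u - 1 then 1 else 0)"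
      by (simp add: W_def sum.inter_filter[symmetric])
    also have "\<dots> = (\<Sum>i\<in>{1..N}. \<Sum>t\<in>T. if t \<le> f i \<and> f i \<le> t + int u - 1 then 1 else 0)"
      by (rule sum.swap)
    also have "\<dots> = (\<Sum>i\<in>{1..N}. u)"
    proof (rule sum.cong[OF refl])
      fix i assume i: "i \<in> {1..N}"
      have "(\<Sum>t\<in>T. if t \<le> f i \<and> f i \<le> t + int u - 1 then 1 else 0) = card {t\<in>T. t \<le> f i \<and> f i \<le> t + int u - 1}"
        using finT by (simp add: sum.inter_filter[symmetric])
      also have "{t\<in>T. t \<le> f i \<and> f i \<le> t + int u - 1} = {f i - int u + 1 .. f i}"
        using fr[OF i] by (auto simp: T_def)
      finally show "(\<Sum>t\<in>T. if t \<le> f i \<and> f i \<le> t + int u - 1 then 1 else 0) = u" by simp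
    qed
    finally show ?thesis by simp
  qed
  have sq: "(card (W t))^2 = card (W t) + card (D t)" for t
  proof -
    have "W t \<times> W t = (\<lambda>i. (i,i)) ` W t \<union> D t" by (auto simp: D_def)
    moreover have "(\<lambda>i. (i,i)) ` W t \<inter> D t = {}" by (auto simp: D_def)
    moreover have "finite (D t)" using finW by (simp add: D_def)
    ultimately have "card (W t \<times> W t) = card ((\<lambda>i. (i,i)) ` W t) + card (D t)"
      using finW by (simp add: card_Un_disjoint)
    moreover have "card ((\<lambda>i. (i,i)) ` W t) = card (W t)" by (simp add: card_image inj_on_def)
    ultimately show ?thesis by (simp add: power2_eq_square card_cartesian_product)
  qed
  define Tg where "Tg = (SIGMA r:{0..int u - 1}. {r - int u .. r})"
  have cardTg: "card Tg = u * (u + 1)"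
  proof -
    have "card Tg = (\<Sum>r\<in>{0..int u - 1}. card {r - int u .. r})" by (simp add: Tg_def)
    also have "\<dots> = (\<Sum>r\<in>{0..int u - 1}. u + 1)" by (intro sum.cong) auto
    finally show ?thesis by simp
  qed
  have bound: "(\<Sum>t\<in>T. card (D t)) \<le> u * (u + 1)"
  proof -
    define g where "g = (\<lambda>(t::int, (i::nat, j::nat)). (f i - t, \<lfloor>m i - m j\<rfloor>))"
    have "(\<Sum>t\<in>T. card (D t)) = card (SIGMA t:T. D t)"
      using finT finW by (simp add: D_def)
    also have "\<dots> \<le> card Tg"
    proof (rule card_inj_on_le)
      show "finite Tg" by (simp add: Tg_def)
      show "g ` (SIGMA t:T. D t) \<subseteq> Tg"
      proof (rule image_subsetI)
        fix p assume p: "p \<in> (SIGMA t:T. D t)"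
        obtain t i j where pe: "p = (t,(i,j))" by (cases p) auto
        from p pe have "t \<in> T" "(i,j) \<in> D t" by auto
        then have w: "t \<le> f i" "f i \<le> t + int u - 1" "t \<le> f j" "f j \<le> t + int u - 1"
          by (auto simp: D_def W_def)
        have "\<lfloor>m i - m j\<rfloor> \<le> f i - f j" "f i - f j \<le> \<lfloor>m i - m j\<rfloor> + 1"
          using floor_diff_bounds unfolding f_def by auto
        with w show "g p \<in> Tg" by (auto simp: g_def Tg_def pe)
      qed
      show "inj_on g (SIGMA t:T. D t)"
      proof (rule inj_onI)
        fix p p' assume p: "p \<in> (SIGMA t:T. D t)" and p': "p' \<in> (SIGMA t:T. D t)" and E0: "g p = g p'"
        obtain t i j where pe: "p = (t,(i,j))" by (cases p) auto
        obtain t' i' j' where pe': "p' = (t',(i',j'))" by (cases p') auto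
        from p pe p' pe' have A: "t \<in> T" "(i,j) \<in> D t" "t' \<in> T" "(i',j') \<in> D t'" by auto
        from E0 pe pe' have E: "g (t,i,j) = g (t',i',j')" by simp
        from A have ij: "i \<in> {1..N}" "j \<in> {1..N}" "i' \<in> {1..N}" "j' \<in> {1..N}" "i \<noteq> j" "i' \<noteq> j'"
          by (auto simp: D_def W_def)
        from E have e1: "f i - t = f i' - t'" and e2: "\<lfloor>m i - m j\<rfloor> = \<lfloor>m i' - m j'\<rfloor>"
          by (auto simp: g_def)
        have lt: "\<bar>(m i + m j') - (m i' + m j)\<bar> < 1"
        proof -
          have a1: "of_int \<lfloor>m i - m j\<rfloor> \<le> m i - m j" "m i - m j < of_int \<lfloor>m i - m j\<rfloor> + 1"
            by (rule of_int_floor_le, rule real_of_int_floor_add_one_gt)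
          have a2: "of_int \<lfloor>m i' - m j'\<rfloor> \<le> m i' - m j'" "m i' - m j' < of_int \<lfloor>m i' - m j'\<rfloor> + 1"
            by (rule of_int_floor_le, rule real_of_int_floor_add_one_gt)
          have "\<bar>(m i - m j) - (m i' - m j')\<bar> < 1"
            using a1 a2 e2 by (simp add: abs_less_iff; linarith)
          then show ?thesis by (simp add: algebra_simps)
        qed
        have H: "\<forall>n1\<in>{1..N}. \<forall>n2\<in>{1..N}. \<forall>n\<in>{1..N}. \<forall>n3\<in>{1..N}.
          (n1, n2) \<noteq> (n, n3) \<and> (n1, n2) \<noteq> (n3, n) \<longrightarrow> \<bar>(m n1 + m n2) - (m n + m n3)\<bar> \<ge> 1"
          using S unfolding R_Sidon_def by blast
        have "(i, j') \<noteq> (i', j) \<and> (i, j') \<noteq> (j, i') \<longrightarrow> \<bar>(m i + m j') - (m i' + m j)\<bar> \<ge> 1"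
          using H ij(1,2,3,4) by blast
        with lt have "(i, j') = (i', j) \<or> (i, j') = (j, i')" by linarith
        with ij have "i = i'" "j = j'" by auto
        with e1 show "p = p'" using pe pe' by simp
      qed
    qed
    finally show ?thesis using cardTg by simp
  qed
  have cs: "(\<Sum>t\<in>T. real (card (W t)))^2 \<le> (\<Sum>t\<in>T. (real (card (W t)))^2) * card T"
    by (rule sum_squared_le_sum_of_squares)
  have s1: "(\<Sum>t\<in>T. real (card (W t))) = real u * real N"
    using sum1 by (metis of_nat_mult of_nat_sum)
  have "(\<Sum>t\<in>T. (real (card (W t)))^2) = real (\<Sum>t\<in>T. (card (W t))^2)" by simp
  also have "\<dots> = real (u * N + (\<Sum>t\<in>T. card (D t)))"
    by (simp add: sq sum.distrib sum1)
  also have "\<dots> \<le> real u * real N + real u * (real u + 1)"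
  proof -
    have "u * N + (\<Sum>t\<in>T. card (D t)) \<le> u * N + u * (u + 1)" using bound by simp
    then have "real (u * N + (\<Sum>t\<in>T. card (D t))) \<le> real (u * N + u * (u + 1))"
      by (simp only: of_nat_le_iff)
    then show ?thesis by (simp add: algebra_simps)
  qed
  finally have s2: "(\<Sum>t\<in>T. (real (card (W t)))^2) \<le> real u * real N + real u * (real u + 1)" .
  show ?thesis
  proof -
    have "(real u * real N)^2 \<le> (\<Sum>t\<in>T. (real (card (W t)))^2) * real (card T)"
      using cs s1 by simp
    also have "\<dots> \<le> (real u * real N + real u * (real u + 1)) * real (card T)"
      by (rule mult_right_mono[OF s2]) simp
    finally show ?thesis using cardT by simp
  qed
qed


lemma quad_bound:
  fixes x a b :: real
  assumes "a \<ge> 0" "b \<ge> 0" "x^2 \<le> a*x + b"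
  shows "x \<le> a + sqrt b"
proof (rule ccontr)
  assume "\<not> x \<le> a + sqrt b"
  then have x: "x > a + sqrt b" by simp
  have sb: "sqrt b \<ge> 0" using assms by simp
  with x assms have xp: "x > 0" by linarith
  have "x * x > (a + sqrt b) * x" using x xp by (rule mult_strict_right_mono)
  moreover have "sqrt b * x \<ge> sqrt b * sqrt b"
    using sb x assms by (intro mult_left_mono) auto
  moreover have "sqrt b * sqrt b = b" using assms by simp
  ultimately show False using assms by (simp add: power2_eq_square algebra_simps)
qed

lemma len_bound:
  assumes "R_Sidon m N" "\<forall>i\<in>{1..N}. m i \<in> {1..real k}"
  shows "N \<le> 2 * k + 4"
proof (rule ccontr)
  assume "\<not> N \<le> 2 * k + 4"
  then have N: "real N \<ge> 2 * real k + 5" by simp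
  have c: "(real 1 * real N)^2 \<le> (real 1 * real N + real 1 * (real 1 + 1)) * (real k + real 1)"
    using core[OF assms, of 1] by simp
  have "real N * real N \<ge> real N * (2 * real k + 5)" using N by (intro mult_left_mono) auto
  moreover have "real N * real k \<ge> 0" by simp
  moreover have "real N * real N \<le> real N + 2 + real N * real k + real k * 2"
    using c by (simp add: power2_eq_square algebra_simps)
  ultimately show False using N by (simp add: algebra_simps)
qed

lemma Nmax_prop: "\<exists>m. R_Sidon m (Nmax k) \<and> (\<forall>i\<in>{1..Nmax k}. m i \<in> {1..real k})"
proof -
  define S where "S = {N. \<exists>m. R_Sidon m N \<and> (\<forall>i\<in>{1..N}. m i \<in> {1..real k})}"
  have "S \<subseteq> {..2*k+4}" using len_bound by (auto simp: S_def)
  then have "finite S" by (rule finite_subset) simp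
  moreover have "0 \<in> S" by (auto simp: S_def R_Sidon_def)
  ultimately have "Max S \<in> S" by (intro Max_in) auto
  then show ?thesis by (simp add: S_def Nmax_def)
qed

definition h :: "real \<Rightarrow> real \<Rightarrow> real" where
  "h c x = 1/c + 1/sqrt x + sqrt ((1 + (c * sqrt x + 1)/x) * (1 + 1/(c * sqrt x)))"

lemma h_lim: assumes "c > 0" shows "((\<lambda>k::nat. h c (real k)) \<longlongrightarrow> 1/c + 1) sequentially"
  unfolding h_def using assms by real_asymp


lemma ratio_bound:
  assumes k1: "k \<ge> 1" and c0: "c > 0"
  shows "real (Nmax k) / sqrt (real k) \<le> h c (real k)"
proof -
  obtain m where S: "R_Sidon m (Nmax k)" and R: "\<forall>i\<in>{1..Nmax k}. m i \<in> {1..real k}"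
    using Nmax_prop by blast
  define N where "N = real (Nmax k)"
  define K where "K = real k"
  define s where "s = sqrt K"
  define u where "u = nat \<lceil>c * s\<rceil>"
  define U where "U = real u"
  have K1: "K \<ge> 1" using k1 by (simp add: K_def)
  have s0: "s > 0" using K1 by (simp add: s_def)
  have ss: "s * s = K" using K1 by (simp add: s_def)
  have cs0: "c * s > 0" using c0 s0 by simp
  have Ueq: "U = of_int \<lceil>c * s\<rceil>" using cs0 by (simp add: U_def u_def)
  have U1: "c * s \<le> U" unfolding Ueq by (rule le_of_int_ceiling)
  have U2: "U \<le> c * s + 1" unfolding Ueq by (simp add: ceiling_correct less_imp_le)
  have U0: "U > 0" using U1 cs0 by linarith
  have u1: "u \<ge> 1" using U0 by (simp add: U_def)
  have N0: "N \<ge> 0" by (simp add: N_def)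
  have core': "(U * N)^2 \<le> (U * N + U * (U + 1)) * (K + U)"
    using core[OF S R u1] by (simp add: U_def N_def K_def)
  define a where "a = (K + U) / U"
  define b where "b = (K + U) * (U + 1) / U"
  have a0: "a \<ge> 0" using U0 K1 by (simp add: a_def)
  have b0: "b \<ge> 0" using U0 K1 by (simp add: b_def)
  have "U^2 * N^2 \<le> U^2 * (a * N + b)"
  proof -
    have "U^2 * (a * N + b) = (U * N + U * (U + 1)) * (K + U)"
      using U0 by (simp add: a_def b_def power2_eq_square field_simps)
    then show ?thesis using core' by (simp add: power_mult_distrib)
  qed
  then have "N^2 \<le> a * N + b" using U0 by simp
  then have Nb: "N \<le> a + sqrt b" by (rule quad_bound[OF a0 b0])
  have "N / s \<le> (a + sqrt b) / s" using Nb s0 by (simp add: divide_right_mono)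
  also have "\<dots> = a / s + sqrt (b / K)"
    using s0 by (simp add: add_divide_distrib s_def real_sqrt_divide)
  also have "a / s = s / U + 1 / s"
    using s0 U0 ss[symmetric] by (simp add: a_def field_simps)
  also have "s / U \<le> 1 / c"
  proof -
    have "s / U \<le> s / (c * s)" using s0 cs0 U1 by (intro divide_left_mono) auto
    also have "\<dots> = 1 / c" using s0 by simp
    finally show ?thesis .
  qed
  also have "b / K = (1 + U / K) * (1 + 1 / U)"
    using U0 K1 by (simp add: b_def field_simps)
  also have "\<dots> \<le> (1 + (c * s + 1) / K) * (1 + 1 / (c * s))"
  proof (rule mult_mono)
    show "1 + U / K \<le> 1 + (c * s + 1) / K" using U2 K1 by (simp add: divide_right_mono)
    show "1 + 1 / U \<le> 1 + 1 / (c * s)" using U1 cs0 by (simp add: frac_le)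
  qed (use U0 K1 cs0 in auto)
  finally have "N / s \<le> 1 / c + 1 / s + sqrt ((1 + (c * s + 1) / K) * (1 + 1 / (c * s)))"
    by simp
  then show ?thesis by (simp add: h_def N_def s_def K_def)
qed

theorem lemma3:
  shows "limsup (\<lambda>k::nat. ereal (real (Nmax k) / sqrt (real k))) \<le> 1"
proof (rule ereal_le_epsilon2)
  fix e :: real assume e: "e > 0"
  define c where "c = 1 / e"
  have c0: "c > 0" using e by (simp add: c_def)
  have "limsup (\<lambda>k::nat. ereal (real (Nmax k) / sqrt (real k))) \<le> limsup (\<lambda>k. ereal (h c (real k)))"
  proof (rule Limsup_mono)
    show "\<forall>\<^sub>F k in sequentially. ereal (real (Nmax k) / sqrt (real k)) \<le> ereal (h c (real k))"
      using eventually_ge_at_top[of "1::nat"] by eventually_elim (use ratio_bound c0 in auto)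
  qed
  also have "limsup (\<lambda>k. ereal (h c (real k))) = ereal (1/c + 1)"
    by (rule lim_imp_Limsup) (auto intro: tendsto_ereal h_lim c0)
  also have "ereal (1/c + 1) = 1 + ereal e" using e by (simp add: c_def)
  finally show "limsup (\<lambda>k::nat. ereal (real (Nmax k) / sqrt (real k))) \<le> 1 + ereal e" .
qed

end
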